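(* Let $G$ be a finite graph with edges labeled $1,\dots,n$, let $\sigma$ be a permutation of $\{1,\dots,n\}$, and let $G_\sigma$ be the same graph with the edge labeled $k$ in $G$ relabeled $\sigma(k)$. Then the chain complexes $\mathcal{C}(G)$ and $\mathcal{C}(G_\sigma)$ are isomorphic (by degree-preserving isomorphisms commuting with the differentials); consequently the cohomology groups $H^i(G)$ are independent of the ordering of the edges and are invariants of the graph.
   Context: Graphs are finite; loops and multiple edges allowed. For $G=(V,E)$ and $s\subseteq E$, $[G:s]$ is the spanning subgraph with edge set $s$. With $1*1=1$, $1*x=x*1=x$, $x*x=0$: an enhanced state is $S=(s,c)$, $s\subseteq E$, $c$ assigning $1$ or $x$ to each component of $[G:s]$; $i(S)=|s|$, $j(S)=$ number of components colored $x$. $C^{i,j}(G)$ is free abelian on enhanced states with $i(S)=i,j(S)=j$; $C^i(G)=\bigoplus_jC^{i,j}(G)$, graded by $j$. For an ordering of the edges, $d(S)=\sum_{e\in E\setminus s}(-1)^{n(e)}S_e$, $n(e)$ the number of edges of $s$ ordered before $e$; $S_e=(s\cup\{e\},c_e)$ where, if $e$ joins a component to itself, colors are unchanged, and if $e$ joins distinct components $E_1,E_2$ the merged component gets $c(E_1)*c(E_2)$ (and $S_e=0$ if this product is $0$). $\mathcal{C}(G)=(C^\bullet(G),d)$, and $H^i(G)$ is its $i$-th cohomology, graded by $j$. *)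

theory Defs
  imports Main "HOL-Combinatorics.Permutations"
begin

text \<open>A finite graph with vertex set V and edges labelled 1..n; edge k has
 endpoints ends k (a pair; loops allowed when both coincide; multiple edges allowed
 since distinct labels may have the same endpoints).\<close>

datatype col = One | X

fun cmult :: "col \<Rightarrow> col \<Rightarrow> col option" where
  "cmult One y = Some y"
| "cmult X One = Some X"
| "cmult X X = None"

type_synonym 'v estate = "nat set \<times> ('v set \<Rightarrow> col)"

definition edge_rel :: "(nat \<Rightarrow> 'v \<times> 'v) \<Rightarrow> nat set \<Rightarrow> ('v \<times> 'v) set" where
  "edge_rel ends s = {ends e | e. e \<in> s}"

definition conn :: "'v set \<Rightarrow> (nat \<Rightarrow> 'v \<times> 'v) \<Rightarrow> nat set \<Rightarrow> ('v \<times> 'v) set" where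
  "conn V ends s = ((edge_rel ends s \<union> (edge_rel ends s)\<inverse>)\<^sup>*) \<inter> (V \<times> V)"

definition comps :: "'v set \<Rightarrow> (nat \<Rightarrow> 'v \<times> 'v) \<Rightarrow> nat set \<Rightarrow> 'v set set" where
  "comps V ends s = V // conn V ends s"

text \<open>enhanced states: s a set of edges, colouring c of the components of [G:s]
 (extended by One outside the components, so that it is determined by its values on them)\<close>
definition states :: "'v set \<Rightarrow> (nat \<Rightarrow> 'v \<times> 'v) \<Rightarrow> nat \<Rightarrow> 'v estate set" where
  "states V ends n = {(s, c). s \<subseteq> {1..n} \<and> (\<forall>C. C \<notin> comps V ends s \<longrightarrow> c C = One)}"

definition ideg :: "'v estate \<Rightarrow> nat" where
  "ideg S = card (fst S)"

definition jdeg :: "'v set \<Rightarrow> (nat \<Rightarrow> 'v \<times> 'v) \<Rightarrow> 'v estate \<Rightarrow> nat" where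
  "jdeg V ends S = card {C \<in> comps V ends (fst S). snd S C = X}"

text \<open>S_e (None represents 0)\<close>
definition Se :: "'v set \<Rightarrow> (nat \<Rightarrow> 'v \<times> 'v) \<Rightarrow> 'v estate \<Rightarrow> nat \<Rightarrow> 'v estate option" where
  "Se V ends S e =
    (let s = fst S; c = snd S; s' = insert e s;
         Ca = conn V ends s `` {fst (ends e)}; Cb = conn V ends s `` {snd (ends e)} in
     if Ca = Cb then Some (s', \<lambda>C. if C \<in> comps V ends s' then c C else One)
     else (case cmult (c Ca) (c Cb) of
             None \<Rightarrow> None
           | Some p \<Rightarrow> Some (s', \<lambda>C. if C = Ca \<union> Cb then p
                                    else if C \<in> comps V ends s' then c C else One)))"

text \<open>chain groups: integer-valued functions on enhanced states (finitely many),
 i.e. elements of the free abelian group on the states\<close>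
definition chains :: "'v set \<Rightarrow> (nat \<Rightarrow> 'v \<times> 'v) \<Rightarrow> nat \<Rightarrow> nat \<Rightarrow> ('v estate \<Rightarrow> int) set" where
  "chains V ends n i = {f. \<forall>S. f S \<noteq> 0 \<longrightarrow> S \<in> states V ends n \<and> ideg S = i}"

definition chains_ij :: "'v set \<Rightarrow> (nat \<Rightarrow> 'v \<times> 'v) \<Rightarrow> nat \<Rightarrow> nat \<Rightarrow> nat \<Rightarrow> ('v estate \<Rightarrow> int) set" where
  "chains_ij V ends n i j =
     {f. \<forall>S. f S \<noteq> 0 \<longrightarrow> S \<in> states V ends n \<and> ideg S = i \<and> jdeg V ends S = j}"

definition dmap :: "'v set \<Rightarrow> (nat \<Rightarrow> 'v \<times> 'v) \<Rightarrow> nat \<Rightarrow> ('v estate \<Rightarrow> int) \<Rightarrow> ('v estate \<Rightarrow> int)" where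
  "dmap V ends n f = (\<lambda>T. \<Sum>S\<in>states V ends n. \<Sum>e\<in>{1..n} - fst S.
      if Se V ends S e = Some T then (-1::int) ^ card {e' \<in> fst S. e' < e} * f S else 0)"

text \<open>G_sigma: the edge labelled k in G gets label sigma k\<close>
definition relabel :: "nat \<Rightarrow> (nat \<Rightarrow> nat) \<Rightarrow> (nat \<Rightarrow> 'v \<times> 'v) \<Rightarrow> (nat \<Rightarrow> 'v \<times> 'v)" where
  "relabel n \<sigma> ends = ends \<circ> inv_into {1..n} \<sigma>"

end

theory Submission
  imports Defs
begin

locale rl =
  fixes V :: "'v set" and ends :: "nat \<Rightarrow> 'v \<times> 'v" and n :: nat and \<sigma> :: "nat \<Rightarrow> nat"
  assumes perm: "\<sigma> permutes {1..n}"
begin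

abbreviation "ends' \<equiv> relabel n \<sigma> ends"
definition "psi S = (\<sigma> ` fst S, snd S)"
definition "rho T = (inv \<sigma> ` fst T, snd T)"
definition "eps s = (-1::int) ^ card {(a,b). a \<in> s \<and> b \<in> s \<and> a < b \<and> \<sigma> b < \<sigma> a}"

lemma bij: "bij \<sigma>" using perm permutes_bij by blast
lemma injs: "inj \<sigma>" using bij bij_is_inj by blast

lemma rho_psi[simp]: "rho (psi S) = S"
  unfolding rho_def psi_def using bij by (simp add: image_comp inv_o_cancel injs)

lemma psi_rho[simp]: "psi (rho T) = T"
  unfolding rho_def psi_def using bij by (simp add: image_comp bij_is_surj surj_f_inv_f)

lemma rel_inv: "e \<in> {1..n} \<Longrightarrow> ends' (\<sigma> e) = ends e"
  unfolding relabel_def using injs by (simp add: inv_into_f_f inj_on_subset)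

lemma edge_rel_psi: "s \<subseteq> {1..n} \<Longrightarrow> edge_rel ends' (\<sigma> ` s) = edge_rel ends s"
proof -
  assume s: "s \<subseteq> {1..n}"
  have "edge_rel ends' (\<sigma> ` s) = (\<lambda>e. ends' (\<sigma> e)) ` s" unfolding edge_rel_def by blast
  also have "\<dots> = ends ` s" using rel_inv s by (intro image_cong) auto
  also have "\<dots> = edge_rel ends s" unfolding edge_rel_def by blast
  finally show ?thesis .
qed

lemma conn_psi: "s \<subseteq> {1..n} \<Longrightarrow> conn V ends' (\<sigma> ` s) = conn V ends s"
  unfolding conn_def using edge_rel_psi by simp

lemma comps_psi: "s \<subseteq> {1..n} \<Longrightarrow> comps V ends' (\<sigma> ` s) = comps V ends s"
  unfolding comps_def using conn_psi by simp

lemma sub_iff: "(\<sigma> ` s \<subseteq> {1..n}) = (s \<subseteq> {1..n})"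
proof -
  have "\<sigma> ` {1..n} = {1..n}" using perm permutes_image by blast
  then show ?thesis using inj_image_subset_iff[OF injs, of s "{1..n}"] by simp
qed

lemma states_psi: "(psi S \<in> states V ends' n) = (S \<in> states V ends n)"
proof (cases S)
  case (Pair s c)
  show ?thesis
  proof (cases "s \<subseteq> {1..n}")
    case True
    then show ?thesis unfolding states_def psi_def Pair using comps_psi[OF True] sub_iff[of s] True by simp
  next
    case False
    then show ?thesis unfolding states_def psi_def Pair using sub_iff[of s] by simp
  qed
qed

lemma ideg_psi: "ideg (psi S) = ideg S"
  unfolding ideg_def psi_def using injs by (simp add: card_image inj_on_subset)

lemma jdeg_psi: "fst S \<subseteq> {1..n} \<Longrightarrow> jdeg V ends' (psi S) = jdeg V ends S"
  unfolding jdeg_def psi_def using comps_psi by simp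

lemma eps_sq: "eps s * eps s = 1"
  unfolding eps_def by (simp add: power_mult_distrib[symmetric])

lemma Se_fst: "Se V ends S e = Some U \<Longrightarrow> fst U = insert e (fst S)"
  unfolding Se_def Let_def by (auto split: if_splits option.splits)

lemma Se_psi:
  assumes e: "e \<in> {1..n}" and s: "fst S \<subseteq> {1..n}"
  shows "Se V ends' (psi S) (\<sigma> e) = map_option psi (Se V ends S e)"
proof -
  obtain s c where S: "S = (s, c)" by (cases S)
  have s': "s \<subseteq> {1..n}" using s S by simp
  have ins: "insert (\<sigma> e) (\<sigma> ` s) = \<sigma> ` insert e s" by simp
  have is': "insert e s \<subseteq> {1..n}" using e s' by simp
  show ?thesis
    unfolding Se_def Let_def S psi_def fst_conv snd_conv ins
      comps_psi[OF is'] conn_psi[OF s'] rel_inv[OF e]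
    by (auto split: option.splits)
qed

lemma sign:
  assumes fin: "finite s" and e: "e \<notin> s"
  shows "eps (insert e s) * (-1) ^ card {x \<in> s. x < e}
       = eps s * (-1) ^ card {x \<in> \<sigma> ` s. x < \<sigma> e}"
proof -
  define I where "I = {(a,b). a \<in> s \<and> b \<in> s \<and> a < b \<and> \<sigma> b < \<sigma> a}"
  define A where "A = {a \<in> s. a < e \<and> \<sigma> e < \<sigma> a}"
  define B where "B = {b \<in> s. e < b \<and> \<sigma> b < \<sigma> e}"
  define C where "C = {a \<in> s. a < e \<and> \<sigma> a < \<sigma> e}"
  have neq: "a \<in> s \<Longrightarrow> \<sigma> a \<noteq> \<sigma> e" for a using e injs by (metis inj_eq)
  have finI: "finite I" unfolding I_def
    by (rule finite_subset[of _ "s \<times> s"]) (auto simp: fin)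
  have fA: "finite A" "finite B" "finite C" unfolding A_def B_def C_def using fin by auto
  have I2: "{(a,b). a \<in> insert e s \<and> b \<in> insert e s \<and> a < b \<and> \<sigma> b < \<sigma> a}
      = I \<union> ((\<lambda>a. (a,e)) ` A \<union> (\<lambda>b. (e,b)) ` B)"
    unfolding I_def A_def B_def using e by auto
  have d1: "I \<inter> ((\<lambda>a. (a,e)) ` A \<union> (\<lambda>b. (e,b)) ` B) = {}"
    unfolding I_def A_def B_def using e by auto
  have d2: "(\<lambda>a. (a,e)) ` A \<inter> (\<lambda>b. (e,b)) ` B = {}"
    unfolding A_def B_def using e by auto
  have cI2: "card {(a,b). a \<in> insert e s \<and> b \<in> insert e s \<and> a < b \<and> \<sigma> b < \<sigma> a}
      = card I + card A + card B"
    unfolding I2 using finI fA d1 d2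
    by (simp add: card_Un_disjoint card_image inj_on_def)
  have n1: "{x \<in> s. x < e} = A \<union> C" unfolding A_def C_def using neq by (auto, metis linorder_neqE_nat)
  have cn1: "card {x \<in> s. x < e} = card A + card C"
    unfolding n1 using fA by (subst card_Un_disjoint) (auto simp: A_def C_def)
  have n2a: "{x \<in> \<sigma> ` s. x < \<sigma> e} = \<sigma> ` {a \<in> s. \<sigma> a < \<sigma> e}" by blast
  have n2b: "{a \<in> s. \<sigma> a < \<sigma> e} = C \<union> B"
  proof
    show "{a \<in> s. \<sigma> a < \<sigma> e} \<subseteq> C \<union> B"
    proof
      fix a assume a: "a \<in> {a \<in> s. \<sigma> a < \<sigma> e}"
      then have "a \<noteq> e" using e by auto
      then have "a < e \<or> e < a" by arith
      then show "a \<in> C \<union> B" using a unfolding B_def C_def by auto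
    qed
  qed (auto simp: B_def C_def)
  have dBC: "C \<inter> B = {}" unfolding B_def C_def by auto
  have cn2: "card {x \<in> \<sigma> ` s. x < \<sigma> e} = card C + card B"
  proof -
    have "card {x \<in> \<sigma> ` s. x < \<sigma> e} = card {a \<in> s. \<sigma> a < \<sigma> e}"
      unfolding n2a by (rule card_image) (rule inj_on_subset[OF injs], simp)
    also have "\<dots> = card C + card B" unfolding n2b using fA dBC by (simp add: card_Un_disjoint)
    finally show ?thesis .
  qed
  have eI: "eps s = (-1) ^ card I" unfolding eps_def I_def by simp
  have "eps (insert e s) * (-1) ^ card {x \<in> s. x < e}
      = (-1) ^ (card I + card C + card B) * ((-1) ^ (2 * card A))"
    unfolding eps_def cI2 cn1 by (simp add: power_add)
  also have "\<dots> = (-1) ^ (card I + card C + card B)"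
    by (simp add: power_mult)
  finally show ?thesis unfolding eI cn2 by (simp add: power_add)
qed

definition "phi f = (\<lambda>T. eps (fst (rho T)) * f (rho T))"
definition "phiinv g = (\<lambda>S. eps (fst S) * g (psi S))"

lemma phiinv_phi[simp]: "phiinv (phi f) = f"
  unfolding phi_def phiinv_def by (simp add: mult.assoc[symmetric] eps_sq)

lemma phi_phiinv[simp]: "phi (phiinv g) = g"
  unfolding phi_def phiinv_def by (simp add: mult.assoc[symmetric] eps_sq)

lemma states_sub: "S \<in> states V ends n \<Longrightarrow> fst S \<subseteq> {1..n}"
  unfolding states_def by auto

lemma phi_ij: "f \<in> chains_ij V ends n i j \<Longrightarrow> phi f \<in> chains_ij V ends' n i j"
proof -
  assume f: "f \<in> chains_ij V ends n i j"
  { fix T assume "phi f T \<noteq> 0"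
    then have "f (rho T) \<noteq> 0" unfolding phi_def by auto
    then have h: "rho T \<in> states V ends n \<and> ideg (rho T) = i \<and> jdeg V ends (rho T) = j"
      using f unfolding chains_ij_def by blast
    have "T \<in> states V ends' n \<and> ideg T = i \<and> jdeg V ends' T = j"
      using h states_psi[of "rho T"] ideg_psi[of "rho T"] jdeg_psi[OF states_sub[of "rho T"]] by simp }
  then show ?thesis unfolding chains_ij_def by blast
qed

lemma phiinv_ij: "g \<in> chains_ij V ends' n i j \<Longrightarrow> phiinv g \<in> chains_ij V ends n i j"
proof -
  assume f: "g \<in> chains_ij V ends' n i j"
  { fix S assume "phiinv g S \<noteq> 0"
    then have "g (psi S) \<noteq> 0" unfolding phiinv_def by auto
    then have h: "psi S \<in> states V ends' n \<and> ideg (psi S) = i \<and> jdeg V ends' (psi S) = j"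
      using f unfolding chains_ij_def by blast
    then have S: "S \<in> states V ends n" using states_psi by blast
    have "S \<in> states V ends n \<and> ideg S = i \<and> jdeg V ends S = j"
      using h S ideg_psi[of S] jdeg_psi[OF states_sub[OF S]] by simp }
  then show ?thesis unfolding chains_ij_def by blast
qed

lemma phi_c: "f \<in> chains V ends n i \<Longrightarrow> phi f \<in> chains V ends' n i"
proof -
  assume f: "f \<in> chains V ends n i"
  { fix T assume "phi f T \<noteq> 0"
    then have "f (rho T) \<noteq> 0" unfolding phi_def by auto
    then have h: "rho T \<in> states V ends n \<and> ideg (rho T) = i"
      using f unfolding chains_def by blast
    have "T \<in> states V ends' n \<and> ideg T = i"
      using h states_psi[of "rho T"] ideg_psi[of "rho T"] by simp }
  then show ?thesis unfolding chains_def by blast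
qed

lemma phiinv_c: "g \<in> chains V ends' n i \<Longrightarrow> phiinv g \<in> chains V ends n i"
proof -
  assume f: "g \<in> chains V ends' n i"
  { fix S assume "phiinv g S \<noteq> 0"
    then have "g (psi S) \<noteq> 0" unfolding phiinv_def by auto
    then have h: "psi S \<in> states V ends' n \<and> ideg (psi S) = i"
      using f unfolding chains_def by blast
    then have "S \<in> states V ends n \<and> ideg S = i" using states_psi ideg_psi by metis }
  then show ?thesis unfolding chains_def by blast
qed

lemma bij_states: "bij_betw psi (states V ends n) (states V ends' n)"
  by (rule bij_betw_byWitness[where f'=rho]) (auto simp: states_psi, metis psi_rho states_psi image_eqI)

lemma bij_edges: "s \<subseteq> {1..n} \<Longrightarrow> bij_betw \<sigma> ({1..n} - s) ({1..n} - \<sigma> ` s)"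
proof -
  have "\<sigma> ` {1..n} = {1..n}" using perm permutes_image by blast
  then show "bij_betw \<sigma> ({1..n} - s) ({1..n} - \<sigma> ` s)"
    using injs by (metis bij_betw_imageI image_set_diff inj_on_subset subset_UNIV)
qed

lemma dmap_phi: "phi (dmap V ends n f) = dmap V ends' n (phi f)"
proof
  fix T
  show "phi (dmap V ends n f) T = dmap V ends' n (phi f) T"
  proof -
    have "dmap V ends' n (phi f) T = (\<Sum>S\<in>states V ends n. \<Sum>e'\<in>{1..n} - fst (psi S).
      if Se V ends' (psi S) e' = Some T then (-1::int) ^ card {x \<in> fst (psi S). x < e'} * phi f (psi S) else 0)"
      unfolding dmap_def by (rule sum.reindex_bij_betw[OF bij_states, symmetric])
    also have "\<dots> = (\<Sum>S\<in>states V ends n. \<Sum>e\<in>{1..n} - fst S.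
      if Se V ends' (psi S) (\<sigma> e) = Some T then (-1::int) ^ card {x \<in> \<sigma> ` fst S. x < \<sigma> e} * (eps (fst S) * f S) else 0)"
    proof (rule sum.cong[OF refl])
      fix S assume S: "S \<in> states V ends n"
      show "(\<Sum>e'\<in>{1..n} - fst (psi S).
      if Se V ends' (psi S) e' = Some T then (-1::int) ^ card {x \<in> fst (psi S). x < e'} * phi f (psi S) else 0) =
        (\<Sum>e\<in>{1..n} - fst S.
      if Se V ends' (psi S) (\<sigma> e) = Some T then (-1::int) ^ card {x \<in> \<sigma> ` fst S. x < \<sigma> e} * (eps (fst S) * f S) else 0)"
      proof -
        have pf: "phi f (psi S) = eps (fst S) * f S" unfolding phi_def by simp
        have fp: "fst (psi S) = \<sigma> ` fst S" by (simp add: psi_def)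
        have img: "{1..n} - \<sigma> ` fst S = \<sigma> ` ({1..n} - fst S)"
          using bij_edges[OF states_sub[OF S]] by (simp add: bij_betw_def)
        show ?thesis unfolding pf fp img
          by (simp add: sum.reindex inj_on_subset[OF injs])
      qed
    qed
    also have "\<dots> = (\<Sum>S\<in>states V ends n. \<Sum>e\<in>{1..n} - fst S. eps (fst (rho T)) *
      (if Se V ends S e = Some (rho T) then (-1::int) ^ card {x \<in> fst S. x < e} * f S else 0))"
    proof (intro sum.cong refl)
      fix S e assume S: "S \<in> states V ends n" and e: "e \<in> {1..n} - fst S"
      have sub: "fst S \<subseteq> {1..n}" using states_sub[OF S] .
      have fin: "finite (fst S)" using sub finite_subset by blast
      have iff: "(Se V ends' (psi S) (\<sigma> e) = Some T) = (Se V ends S e = Some (rho T))"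
      proof -
        have e1: "e \<in> {1..n}" using e by simp
        have pr: "(psi U = T) = (U = rho T)" for U by (metis psi_rho rho_psi)
        show ?thesis unfolding Se_psi[OF e1 sub]
          by (cases "Se V ends S e") (simp_all add: pr)
      qed
      show "(if Se V ends' (psi S) (\<sigma> e) = Some T then (-1::int) ^ card {x \<in> \<sigma> ` fst S. x < \<sigma> e} * (eps (fst S) * f S) else 0)
         = eps (fst (rho T)) *
      (if Se V ends S e = Some (rho T) then (-1::int) ^ card {x \<in> fst S. x < e} * f S else 0)"
      proof (cases "Se V ends S e = Some (rho T)")
        case True
        then have "fst (rho T) = insert e (fst S)" by (rule Se_fst)
        then show ?thesis using True iff sign[OF fin, of e] e by (simp add: mult.assoc[symmetric] mult.commute)
      next
        case False
        then show ?thesis using iff by simp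
      qed
    qed
    also have "\<dots> = phi (dmap V ends n f) T"
      unfolding phi_def dmap_def by (simp add: sum_distrib_left)
    finally show ?thesis by simp
  qed
qed

end

theorem mainTheorem3:
  fixes V :: "'v set" and ends :: "nat \<Rightarrow> 'v \<times> 'v" and n :: nat and \<sigma> :: "nat \<Rightarrow> nat"
  assumes "finite V"
    and "\<forall>e\<in>{1..n}. fst (ends e) \<in> V \<and> snd (ends e) \<in> V"
    and "\<sigma> permutes {1..n}"
  shows "\<exists>\<phi> :: nat \<Rightarrow> ('v estate \<Rightarrow> int) \<Rightarrow> ('v estate \<Rightarrow> int).
     \<forall>i. bij_betw (\<phi> i) (chains V ends n i) (chains V (relabel n \<sigma> ends) n i)
       \<and> (\<forall>f\<in>chains V ends n i. \<forall>g\<in>chains V ends n i.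
             \<phi> i (\<lambda>S. f S + g S) = (\<lambda>T. \<phi> i f T + \<phi> i g T))
       \<and> (\<forall>j. \<phi> i ` chains_ij V ends n i j = chains_ij V (relabel n \<sigma> ends) n i j)
       \<and> (\<forall>f\<in>chains V ends n i.
             \<phi> (Suc i) (dmap V ends n f) = dmap V (relabel n \<sigma> ends) n (\<phi> i f))"
proof -
  interpret rl V ends n \<sigma> using assms(3) by unfold_locales
  have ij: "phi ` chains_ij V ends n i j = chains_ij V (relabel n \<sigma> ends) n i j" for i j
    using phi_ij phiinv_ij by (auto, metis phi_phiinv image_eqI)
  show ?thesis
    apply (rule exI[of _ "\<lambda>i. phi"])
    apply (intro allI conjI ballI)
    subgoal for i
      apply (rule bij_betw_byWitness[where f'=phiinv])
         apply simp
        apply simp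
       apply (auto intro: phi_c phiinv_c)
      done
    subgoal by (simp add: phi_def algebra_simps)
    subgoal by (rule ij)
    subgoal by (rule dmap_phi)
    done
qed

end
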